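(* Let $\mathcal{C}$ be an arbitrary linear code of length $n$. For each $i = 1,2,\ldots,d(\mathcal{C})-1$, define $$w_i = \max\left\{\left\lceil \frac{n+1}{i}\right\rceil - 1,\ d(\mathcal{C}^\perp)\right\}.$$ Then $$\rho(\mathcal{C}) \ge \binom{n}{i} \Big/ \left( w_i \binom{n-w_i}{i-1}\right) \quad \text{for } i = 1,2,\ldots,d(\mathcal{C})-1.$$
   Context: A parity-check matrix for a linear code $\mathcal{C}$ (over a finite field) is any matrix (possibly with linearly dependent rows) whose rows span the dual code $\mathcal{C}^\perp$. $d(\mathcal{C})$ and $d(\mathcal{C}^\perp)$ denote the minimum Hamming distances of $\mathcal{C}$ and $\mathcal{C}^\perp$. For a parity-check matrix $H$, the stopping distance $s(H)$ is the largest integer such that for every set of $s(H)-1$ or fewer columns of $H$, the projection of $H$ onto those columns contains at least one row of Hamming weight exactly one. The stopping redundancy $\rho(\mathcal{C})$ is the smallest number of rows of a parity-check matrix $H$ for $\mathcal{C}$ with $s(H) = d(\mathcal{C})$. *)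

theory Defs
  imports Complex_Main
begin

text \<open>Words of length n = CARD('n) over a finite field 'a are functions 'n \<Rightarrow> 'a;
  coordinates (columns) are indexed by the finite type 'n.\<close>

definition linear_code :: "('n::finite \<Rightarrow> 'a::{field,finite}) set \<Rightarrow> bool" where
  "linear_code C \<longleftrightarrow> (\<lambda>j. 0) \<in> C \<and> (\<forall>x\<in>C. \<forall>y\<in>C. (\<lambda>j. x j + y j) \<in> C) \<and> (\<forall>c x. x \<in> C \<longrightarrow> (\<lambda>j. c * x j) \<in> C)"

definition hweight :: "('n::finite \<Rightarrow> 'a::zero) \<Rightarrow> nat" where
  "hweight x = card {j. x j \<noteq> 0}"

definition dual_code :: "('n::finite \<Rightarrow> 'a::{field,finite}) set \<Rightarrow> ('n \<Rightarrow> 'a) set" where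
  "dual_code C = {y. \<forall>x\<in>C. (\<Sum>j\<in>UNIV. x j * y j) = 0}"

text \<open>Minimum Hamming distance = minimum weight of a nonzero codeword (linear code).\<close>
definition min_dist :: "('n::finite \<Rightarrow> 'a::{field,finite}) set \<Rightarrow> nat" where
  "min_dist C = (LEAST w. \<exists>x\<in>C. x \<noteq> (\<lambda>j. 0) \<and> hweight x = w)"

text \<open>A matrix with m rows is a list of m rows (repetitions allowed).\<close>
definition row_span :: "('n::finite \<Rightarrow> 'a::{field,finite}) list \<Rightarrow> ('n \<Rightarrow> 'a) set" where
  "row_span H = {v. \<exists>c. v = (\<lambda>j. \<Sum>k<length H. c k * (H ! k) j)}"

definition is_parity_check :: "('n::finite \<Rightarrow> 'a::{field,finite}) list \<Rightarrow> ('n \<Rightarrow> 'a) set \<Rightarrow> bool" where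
  "is_parity_check H C \<longleftrightarrow> row_span H = dual_code C"

definition has_weight_one_row :: "('n::finite \<Rightarrow> 'a::{field,finite}) list \<Rightarrow> 'n set \<Rightarrow> bool" where
  "has_weight_one_row H S \<longleftrightarrow> (\<exists>r\<in>set H. card {j\<in>S. r j \<noteq> 0} = 1)"

definition stopping_distance :: "('n::finite \<Rightarrow> 'a::{field,finite}) list \<Rightarrow> nat" where
  "stopping_distance H =
     (GREATEST s. \<forall>S. S \<noteq> {} \<and> card S < s \<longrightarrow> has_weight_one_row H S)"

definition stopping_redundancy :: "('n::finite \<Rightarrow> 'a::{field,finite}) set \<Rightarrow> nat" where
  "stopping_redundancy C =
     (LEAST m. \<exists>H. length H = m \<and> is_parity_check H C \<and> stopping_distance H = min_dist C)"

end

theory Submission imports Defs "HOL-Library.Function_Algebras" begin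

lemma sum_apply_fun: "(sum f A) x = (\<Sum>a\<in>A. f a x)"
  by (induct A rule: infinite_finite_induct) (auto simp: zero_fun_def plus_fun_def)

lemma sep_functional:
  fixes W :: "('n::finite \<Rightarrow> 'a::field) set" and v :: "'n \<Rightarrow> 'a"
  assumes W0: "(\<lambda>j. 0) \<in> W" and Wadd: "\<And>x y. x\<in>W \<Longrightarrow> y\<in>W \<Longrightarrow> (\<lambda>j. x j + y j) \<in> W"
    and Wsc: "\<And>c x. x\<in>W \<Longrightarrow> (\<lambda>j. c * x j) \<in> W" and vW: "v \<notin> W"
  shows "\<exists>y. (\<forall>x\<in>W. (\<Sum>j\<in>UNIV. x j * y j) = 0) \<and> (\<Sum>j\<in>UNIV. v j * y j) = 1"
proof -
  define sc where "sc = (\<lambda>(c::'a) (x::'n\<Rightarrow>'a). (\<lambda>j. c * x j))"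
  interpret V: vector_space sc
    by unfold_locales (auto simp: sc_def fun_eq_iff algebra_simps)
  interpret F: vector_space "(*) :: 'a \<Rightarrow> 'a \<Rightarrow> 'a"
    by unfold_locales (auto simp: algebra_simps)
  interpret P: vector_space_pair sc "(*) :: 'a \<Rightarrow> 'a \<Rightarrow> 'a" ..
  have sub: "V.subspace W"
  proof (rule V.subspaceI)
    show "0 \<in> W" using W0 by (simp add: zero_fun_def)
    show "x + y \<in> W" if xW: "x \<in> W" and yW: "y \<in> W" for x y
      using Wadd[OF that] by (simp add: plus_fun_def)
    show "sc c x \<in> W" if "x \<in> W" for c x
      using Wsc[OF that] by (simp add: sc_def)
  qed
  obtain B where B: "B \<subseteq> W" "V.independent B" "W \<subseteq> V.span B" "card B = V.dim W"
    by (rule V.basis_exists)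
  have "V.span B \<subseteq> W" by (rule V.span_minimal[OF B(1) sub])
  then have vsp: "v \<notin> V.span B" using vW by blast
  have ind: "V.independent (insert v B)" by (rule V.independent_insertI[OF vsp B(2)])
  define f0 where "f0 = (\<lambda>x. if x = v then (1::'a) else 0)"
  obtain g where lg: "Vector_Spaces.linear sc (*) g" and gB: "\<forall>x\<in>insert v B. g x = f0 x"
    using P.linear_independent_extend[OF ind, of f0] by (elim exE conjE)
  interpret G: Vector_Spaces.linear sc "(*)" g by (rule lg)
  have vB: "v \<notin> B"
  proof
    assume "v \<in> B" then have "v \<in> V.span B" by (rule V.span_base)
    with vsp show False by simp
  qed
  have ker: "V.subspace {x. g x = 0}"
  proof (rule V.subspaceI)
    show "0 \<in> {x. g x = 0}" by simp
    show "x + y \<in> {x. g x = 0}" if "x \<in> {x. g x = 0}" "y \<in> {x. g x = 0}" for x y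
      using that by (simp add: G.add)
    show "sc c x \<in> {x. g x = 0}" if "x \<in> {x. g x = 0}" for c x
      using that by (simp add: G.scale)
  qed
  have "B \<subseteq> {x. g x = 0}" using gB vB by (auto simp: f0_def)
  then have "V.span B \<subseteq> {x. g x = 0}" by (rule V.span_minimal[OF _ ker])
  with B(3) have gW: "\<forall>x\<in>W. g x = 0" by blast
  have gv: "g v = 1" using gB by (simp add: f0_def)
  define y where "y = (\<lambda>j. g (\<lambda>k. if k = j then 1 else 0))"
  have rep: "g x = (\<Sum>j\<in>UNIV. x j * y j)" for x
  proof -
    have "x = (\<Sum>j\<in>UNIV. sc (x j) (\<lambda>k. if k = j then 1 else 0))"
      unfolding fun_eq_iff sc_def sum_apply_fun by (simp add: if_distrib cong: if_cong)
    then have "g x = g (\<Sum>j\<in>UNIV. sc (x j) (\<lambda>k. if k = j then 1 else 0))"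
      by (rule arg_cong)
    also have "\<dots> = (\<Sum>j\<in>UNIV. g (sc (x j) (\<lambda>k. if k = j then 1 else 0)))"
      by (rule G.sum)
    also have "\<dots> = (\<Sum>j\<in>UNIV. x j * y j)" by (simp add: G.scale y_def)
    finally show ?thesis .
  qed
  show ?thesis using gW gv rep by (intro exI[of _ y]) simp
qed
lemma step_dec:
  fixes n t i :: nat
  assumes "1 \<le> i" "t + 1 \<le> n" "n + 1 \<le> (t + 1) * i"
  shows "(t + 1) * ((n - (t + 1)) choose (i - 1)) \<le> t * ((n - t) choose (i - 1))"
proof -
  define m where "m = n - t"
  define k where "k = i - 1"
  have m1: "m \<ge> 1" using assms by (simp add: m_def)
  have nm: "n - (t + 1) = m - 1" by (simp add: m_def)
  have abs: "(m - k) * (m choose k) = m * ((m - 1) choose k)" by (rule binomial_absorb_comp)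
  have ineq: "(t + 1) * (m - k) \<le> t * m"
  proof (cases "k \<le> m")
    case True
    have "m \<le> (t + 1) * k"
    proof -
      have "(t + 1) * k = (t + 1) * i - (t + 1)" using assms(1) by (simp add: k_def diff_mult_distrib2)
      then show ?thesis using assms by (simp add: m_def)
    qed
    then show ?thesis using True by (simp add: diff_mult_distrib2 algebra_simps)
  next
    case False then show ?thesis by simp
  qed
  have "m * ((t + 1) * ((m - 1) choose k)) = (t + 1) * (m * ((m - 1) choose k))" by (simp only: mult.left_commute)
  also have "\<dots> = (t + 1) * ((m - k) * (m choose k))" by (simp only: abs)
  also have "\<dots> \<le> (t * m) * (m choose k)"
    using mult_le_mono1[OF ineq, of "m choose k"] by (metis mult.assoc)
  also have "\<dots> = m * (t * (m choose k))" by (simp add: algebra_simps)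
  finally have "(t + 1) * ((m - 1) choose k) \<le> t * (m choose k)"
    using m1 by simp
  then show ?thesis by (simp add: nm m_def k_def)
qed

lemma step_inc:
  fixes n t i :: nat
  assumes "1 \<le> i" "t + 1 \<le> n" "(t + 1) * i \<le> n + 1"
  shows "t * ((n - t) choose (i - 1)) \<le> (t + 1) * ((n - (t + 1)) choose (i - 1))"
proof -
  define m where "m = n - t"
  define k where "k = i - 1"
  have m1: "m \<ge> 1" using assms by (simp add: m_def)
  have nm: "n - (t + 1) = m - 1" by (simp add: m_def)
  have abs: "(m - k) * (m choose k) = m * ((m - 1) choose k)" by (rule binomial_absorb_comp)
  show ?thesis
  proof (cases "k \<le> m")
    case False
    have "(n - t) choose (i - 1) = 0" 
      by (rule binomial_eq_0) (use False in \<open>simp add: m_def k_def\<close>)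
    then show ?thesis by (metis mult_0_right zero_le)
  next
    case True
    have "(t + 1) * k \<le> m"
    proof -
      have "(t + 1) * k = (t + 1) * i - (t + 1)" using assms(1) by (simp add: k_def diff_mult_distrib2)
      then show ?thesis using assms by (simp add: m_def)
    qed
    then have ineq: "t * m \<le> (t + 1) * (m - k)" using True by (simp add: diff_mult_distrib2 algebra_simps)
    have "m * (t * (m choose k)) = (t * m) * (m choose k)" by (simp add: algebra_simps)
    also have "\<dots> \<le> ((t + 1) * (m - k)) * (m choose k)" using mult_le_mono1[OF ineq] .
    also have "\<dots> = (t + 1) * ((m - k) * (m choose k))" by (simp only: mult.assoc)
    also have "\<dots> = (t + 1) * (m * ((m - 1) choose k))" by (simp only: abs)
    also have "\<dots> = m * ((t + 1) * ((m - 1) choose k))" by (simp only: mult.left_commute)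
    finally have "t * (m choose k) \<le> (t + 1) * ((m - 1) choose k)"
      using m1 by simp
    then show ?thesis by (simp add: nm m_def k_def)
  qed
qed

lemma f_bound:
  fixes n i t dd :: nat
  assumes i1: "1 \<le> i" and dt: "dd \<le> t" and tn: "t \<le> n"
  shows "t * ((n - t) choose (i - 1))
     \<le> max (nat (\<lceil>real (n + 1) / real i\<rceil> - 1)) dd * ((n - max (nat (\<lceil>real (n + 1) / real i\<rceil> - 1)) dd) choose (i - 1))"
proof -
  define f where "f = (\<lambda>t::nat. t * ((n - t) choose (i - 1)))"
  define c where "c = \<lceil>real (n + 1) / real i\<rceil>"
  define a where "a = nat (c - 1)"
  have ipos: "real i > 0" using i1 by simp
  have "real (n + 1) / real i > 0" using ipos by simp
  then have c1: "c \<ge> 1" unfolding c_def by linarith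
  then have ac: "real a = real_of_int c - 1" unfolding a_def by simp
  have "real_of_int c - 1 < real (n + 1) / real i" unfolding c_def by linarith
  then have "(real_of_int c - 1) * real i < real (n + 1)" using ipos by (simp add: pos_less_divide_eq)
  then have "real a * real i < real (n + 1)" using ac by simp
  then have "real (a * i) < real (n + 1)" by simp
  then have ai: "a * i \<le> n" by linarith
  have "real (n + 1) / real i \<le> real_of_int c" unfolding c_def by (rule le_of_int_ceiling)
  then have "real (n + 1) \<le> real_of_int c * real i" using ipos by (simp add: pos_divide_le_eq)
  then have "real (n + 1) \<le> (real a + 1) * real i" using ac by simp
  then have "real (n + 1) \<le> real ((a + 1) * i)" by (simp add: algebra_simps)
  then have a1i: "n + 1 \<le> (a + 1) * i" by linarith
  have an: "a \<le> n" using ai i1 by (metis le_trans mult_le_mono2 nat_mult_1_right)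
  have inc: "f s \<le> f a" if "s \<le> a" for s
    using that
  proof (induction s rule: inc_induct)
    case base then show ?case by simp
  next
    case (step s)
    have "f s \<le> f (s + 1)" unfolding f_def
    proof (rule step_inc[OF i1])
      show "s + 1 \<le> n" using step.hyps an by simp
      have "(s + 1) * i \<le> a * i" using step.hyps by (intro mult_le_mono1) simp
      then show "(s + 1) * i \<le> n + 1" using ai by simp
    qed
    then show ?case using step.IH by simp
  qed
  have dec: "f s' \<le> f s" if "a \<le> s" "s \<le> s'" "s' \<le> n" for s s'
    using that(2,3)
  proof (induction s' rule: dec_induct)
    case base then show ?case by simp
  next
    case (step s')
    have "f (s' + 1) \<le> f s'" unfolding f_def
    proof (rule step_dec[OF i1])
      show "s' + 1 \<le> n" using step by simp
      have "(a + 1) * i \<le> (s' + 1) * i" using step.hyps that(1) by (intro mult_le_mono1) simp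
      then show "n + 1 \<le> (s' + 1) * i" using a1i by linarith
    qed
    then show ?case using step by simp
  qed
  have "f t \<le> f (max a dd)"
  proof (cases "dd \<le> a")
    case True
    then have "max a dd = a" by simp
    moreover have "f t \<le> f a"
    proof (cases "t \<le> a")
      case True then show ?thesis by (rule inc)
    next
      case False then show ?thesis using dec[of a t] tn by simp
    qed
    ultimately show ?thesis by simp
  next
    case False
    then have "max a dd = dd" by simp
    moreover have "f t \<le> f dd" using dec[of dd t] False dt tn by simp
    ultimately show ?thesis by simp
  qed
  then show ?thesis unfolding f_def a_def c_def by simp
qed


lemma md_facts:
  fixes C :: "('n::finite \<Rightarrow> 'a::{field,finite}) set"
  assumes "\<exists>x\<in>C. x \<noteq> (\<lambda>j. 0)"
  shows "\<exists>x0\<in>C. x0 \<noteq> (\<lambda>j. 0) \<and> hweight x0 = min_dist C"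
    and "\<And>x. x \<in> C \<Longrightarrow> x \<noteq> (\<lambda>j. 0) \<Longrightarrow> min_dist C \<le> hweight x"
proof -
  have ex: "\<exists>w. \<exists>x\<in>C. x \<noteq> (\<lambda>j. 0) \<and> hweight x = w" using assms by blast
  show "\<exists>x0\<in>C. x0 \<noteq> (\<lambda>j. 0) \<and> hweight x0 = min_dist C"
    unfolding min_dist_def by (rule LeastI_ex[OF ex])
  show "min_dist C \<le> hweight x" if "x \<in> C" "x \<noteq> (\<lambda>j. 0)" for x
    unfolding min_dist_def by (rule Least_le) (use that in blast)
qed

lemma weight_one_exists:
  fixes C :: "('n::finite \<Rightarrow> 'a::{field,finite}) set"
  assumes lc: "linear_code C" and md: "\<And>x. x \<in> C \<Longrightarrow> x \<noteq> (\<lambda>j. 0) \<Longrightarrow> d \<le> hweight x"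
    and j0: "j0 \<in> S" and cS: "card S < d"
  shows "\<exists>y\<in>dual_code C. card {j\<in>S. y j \<noteq> 0} = 1"
proof -
  define W where "W = {v. \<exists>c\<in>C. \<exists>z. (\<forall>j. j \<notin> S - {j0} \<longrightarrow> z j = 0) \<and> v = (\<lambda>j. c j + z j)}"
  define e where "e = (\<lambda>i::'n. \<lambda>k. if k = i then (1::'a) else 0)"
  have C0: "(\<lambda>j. 0) \<in> C" and Cadd: "\<And>x y. x \<in> C \<Longrightarrow> y \<in> C \<Longrightarrow> (\<lambda>j. x j + y j) \<in> C"
    and Csc: "\<And>c x. x \<in> C \<Longrightarrow> (\<lambda>j. c * x j) \<in> C"
    using lc unfolding linear_code_def by blast+
  have W0: "(\<lambda>j. 0) \<in> W" unfolding W_def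
    by (rule CollectI, rule bexI[OF _ C0], rule exI[of _ "\<lambda>j. 0"]) simp
  have Wadd: "(\<lambda>j. x j + y j) \<in> W" if xW: "x \<in> W" and yW: "y \<in> W" for x y
  proof -
    obtain c1 z1 where 1: "c1 \<in> C" "\<forall>j. j \<notin> S - {j0} \<longrightarrow> z1 j = 0" "x = (\<lambda>j. c1 j + z1 j)"
      using xW unfolding W_def by blast
    obtain c2 z2 where 2: "c2 \<in> C" "\<forall>j. j \<notin> S - {j0} \<longrightarrow> z2 j = 0" "y = (\<lambda>j. c2 j + z2 j)"
      using yW unfolding W_def by blast
    show ?thesis unfolding W_def
      by (rule CollectI, rule bexI[OF _ Cadd[OF 1(1) 2(1)]], rule exI[of _ "\<lambda>j. z1 j + z2 j"])
        (use 1 2 in \<open>auto simp: algebra_simps\<close>)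
  qed
  have Wsc: "(\<lambda>j. a * x j) \<in> W" if xW: "x \<in> W" for a x
  proof -
    obtain c1 z1 where 1: "c1 \<in> C" "\<forall>j. j \<notin> S - {j0} \<longrightarrow> z1 j = 0" "x = (\<lambda>j. c1 j + z1 j)"
      using xW unfolding W_def by blast
    show ?thesis unfolding W_def
      by (rule CollectI, rule bexI[OF _ Csc[OF 1(1)]], rule exI[of _ "\<lambda>j. a * z1 j"])
        (use 1 in \<open>auto simp: algebra_simps\<close>)
  qed
  have CW: "x \<in> W" if "x \<in> C" for x unfolding W_def
    by (rule CollectI, rule bexI[OF _ that], rule exI[of _ "\<lambda>j. 0"]) simp
  have eW: "e j \<in> W" if "j \<in> S - {j0}" for j unfolding W_def
    by (rule CollectI, rule bexI[OF _ C0], rule exI[of _ "e j"]) (use that in \<open>auto simp: e_def\<close>)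
  have vW: "e j0 \<notin> W"
  proof
    assume "e j0 \<in> W"
    then obtain c z where cz: "c \<in> C" "\<forall>j. j \<notin> S - {j0} \<longrightarrow> z j = 0" "e j0 = (\<lambda>j. c j + z j)"
      unfolding W_def by blast
    have ej: "e j0 j = c j + z j" for j using cz(3) by metis
    have cj0: "c j0 = 1" using ej[of j0] cz(2) by (simp add: e_def)
    have sub: "{j. c j \<noteq> 0} \<subseteq> S"
    proof
      fix j assume "j \<in> {j. c j \<noteq> 0}"
      then have cj: "c j \<noteq> 0" by simp
      show "j \<in> S"
      proof (rule ccontr)
        assume "j \<notin> S"
        then have "j \<noteq> j0" "z j = 0" using j0 cz(2) by auto
        then have "c j = 0" using ej[of j] by (simp add: e_def)
        with cj show False by simp
      qed
    qed
    have cnz: "c \<noteq> (\<lambda>j. 0)" using cj0 by (metis one_neq_zero)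
    have "hweight c \<le> card S" unfolding hweight_def by (rule card_mono[OF finite sub])
    moreover have "d \<le> hweight c" by (rule md[OF cz(1) cnz])
    ultimately show False using cS by simp
  qed
  obtain y where y: "\<forall>x\<in>W. (\<Sum>j\<in>UNIV. x j * y j) = 0" "(\<Sum>j\<in>UNIV. e j0 j * y j) = 1"
    using sep_functional[OF W0 Wadd Wsc vW] by blast
  have ev: "(\<Sum>k\<in>UNIV. e j k * y k) = y j" for j
  proof -
    have "(\<Sum>k\<in>UNIV. e j k * y k) = (\<Sum>k\<in>UNIV. if j = k then y k else 0)"
      by (rule sum.cong) (auto simp: e_def)
    also have "\<dots> = y j" by (simp add: sum.delta)
    finally show ?thesis .
  qed
  have yd: "y \<in> dual_code C" unfolding dual_code_def using y(1) CW by blast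
  have yj0: "y j0 = 1" using y(2) ev by simp
  have yz: "y j = 0" if "j \<in> S - {j0}" for j using bspec[OF y(1) eW[OF that]] ev[of j] by argo
  have "{j\<in>S. y j \<noteq> 0} = {j0}" using yj0 yz j0 by auto
  then show ?thesis using yd by (intro bexI[of _ y]) simp_all
qed

lemma dual_lin:
  fixes C :: "('n::finite \<Rightarrow> 'a::{field,finite}) set"
  assumes "set H \<subseteq> dual_code C"
  shows "row_span H \<subseteq> dual_code C"
proof
  fix v assume "v \<in> row_span H"
  then obtain c where v: "v = (\<lambda>j. \<Sum>k<length H. c k * (H ! k) j)" unfolding row_span_def by blast
  have "(\<Sum>j\<in>UNIV. x j * v j) = 0" if "x \<in> C" for x
  proof -
    have hk: "(\<Sum>j\<in>UNIV. x j * (H ! k) j) = 0" if "k < length H" for k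
      using assms nth_mem[OF that] \<open>x \<in> C\<close> unfolding dual_code_def by blast
    have "(\<Sum>j\<in>UNIV. x j * v j) = (\<Sum>j\<in>UNIV. \<Sum>k<length H. c k * (x j * (H ! k) j))"
      unfolding v by (simp add: sum_distrib_left algebra_simps)
    also have "\<dots> = (\<Sum>k<length H. c k * (\<Sum>j\<in>UNIV. x j * (H ! k) j))"
      by (subst sum.swap) (simp add: sum_distrib_left)
    also have "\<dots> = 0" using hk by simp
    finally show ?thesis .
  qed
  then show "v \<in> dual_code C" unfolding dual_code_def by blast
qed

lemma good_H_exists:
  fixes C :: "('n::finite \<Rightarrow> 'a::{field,finite}) set"
  assumes lc: "linear_code C" and nz: "\<exists>x\<in>C. x \<noteq> (\<lambda>j. 0)"
  shows "\<exists>H. is_parity_check H C \<and> stopping_distance H = min_dist C"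
proof -
  obtain H where H: "set H = dual_code C" using finite_list[of "dual_code C"] by auto
  have "row_span H \<subseteq> dual_code C" using dual_lin[of H C] H by simp
  moreover have "dual_code C \<subseteq> row_span H"
  proof
    fix y assume "y \<in> dual_code C"
    then obtain k where k: "k < length H" "H ! k = y" using H by (metis in_set_conv_nth)
    have "y = (\<lambda>j. \<Sum>k'<length H. (if k' = k then 1 else 0) * (H ! k') j)"
    proof
      fix j
      have "(\<Sum>k'<length H. (if k' = k then 1 else 0) * (H ! k') j)
          = (\<Sum>k'<length H. if k = k' then (H ! k') j else 0)"
        by (rule sum.cong) auto
      also have "\<dots> = (H ! k) j" using k(1) by (simp add: sum.delta)
      finally show "y j = (\<Sum>k'<length H. (if k' = k then 1 else 0) * (H ! k') j)" using k(2) by simp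
    qed
    then show "y \<in> row_span H" unfolding row_span_def
      by (intro CollectI exI[of _ "\<lambda>k'. if k' = k then 1 else 0"])
  qed
  ultimately have pc: "is_parity_check H C" unfolding is_parity_check_def by blast
  define d where "d = min_dist C"
  obtain x0 where x0: "x0 \<in> C" "x0 \<noteq> (\<lambda>j. 0)" "hweight x0 = d"
    using md_facts(1)[OF nz] d_def by blast
  have md: "\<And>x. x \<in> C \<Longrightarrow> x \<noteq> (\<lambda>j. 0) \<Longrightarrow> d \<le> hweight x"
    using md_facts(2)[OF nz] d_def by blast
  define P where "P = (\<lambda>s. \<forall>S. S \<noteq> {} \<and> card S < s \<longrightarrow> has_weight_one_row H S)"
  have Pd: "P d" unfolding P_def has_weight_one_row_def
  proof (intro allI impI)
    fix S :: "'n set" assume S: "S \<noteq> {} \<and> card S < d"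
    then obtain j0 where "j0 \<in> S" by blast
    from weight_one_exists[OF lc md this] S H show "\<exists>r\<in>set H. card {j \<in> S. r j \<noteq> 0} = 1" by blast
  qed
  have Pbound: "s \<le> d" if Ps: "P s" for s
  proof (rule ccontr)
    assume "\<not> s \<le> d"
    define S0 where "S0 = {j. x0 j \<noteq> 0}"
    have "S0 \<noteq> {}" using x0(2) unfolding S0_def by auto
    moreover have "card S0 < s" using x0(3) \<open>\<not> s \<le> d\<close> unfolding S0_def hweight_def by simp
    ultimately obtain r where r: "r \<in> set H" "card {j \<in> S0. r j \<noteq> 0} = 1"
      using Ps unfolding P_def has_weight_one_row_def by blast
    then obtain j0 where j0: "{j \<in> S0. r j \<noteq> 0} = {j0}" by (metis card_1_singletonE)
    have rd: "(\<Sum>j\<in>UNIV. x0 j * r j) = 0" using r(1) H x0(1) unfolding dual_code_def by blast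
    have zero: "x0 j * r j = 0" if "j \<noteq> j0" for j
    proof (cases "x0 j = 0")
      case False
      then have "j \<in> S0" unfolding S0_def by simp
      then have "r j = 0" using j0 that by blast
      then show ?thesis by simp
    qed simp
    have "(\<Sum>j\<in>UNIV. x0 j * r j) = x0 j0 * r j0"
      by (rule sum.mono_neutral_left[of UNIV "{j0}", simplified, symmetric]) (use zero in auto)
    moreover have "x0 j0 \<noteq> 0" "r j0 \<noteq> 0" using j0 unfolding S0_def by blast+
    ultimately show False using rd by simp
  qed
  have "Greatest P = d" by (rule Greatest_equality[of P d, OF Pd Pbound])
  then have "stopping_distance H = d"
    unfolding stopping_distance_def P_def by simp
  then show ?thesis using pc d_def by blast
qed

lemma sd_prop:
  fixes H :: "('n::finite \<Rightarrow> 'a::{field,finite}) list"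
  assumes "stopping_distance H = d"
  shows "\<forall>S. S \<noteq> {} \<and> card S < d \<longrightarrow> has_weight_one_row H S"
proof -
  define P where "P = (\<lambda>s. \<forall>S. S \<noteq> {} \<and> card S < s \<longrightarrow> has_weight_one_row H S)"
  have sd: "Greatest P = d" using assms unfolding stopping_distance_def P_def by simp
  show ?thesis
  proof (cases "\<forall>s. P s")
    case True then show ?thesis unfolding P_def by blast
  next
    case False
    then obtain s0 where s0: "\<not> P s0" by blast
    have bound: "s \<le> s0" if "P s" for s
    proof (rule ccontr)
      assume "\<not> s \<le> s0"
      then have "P s0" using that unfolding P_def by auto
      with s0 show False by simp
    qed
    have "P 0" unfolding P_def by simp
    then have "P (Greatest P)" using GreatestI_ex_nat[of P s0] bound by blast
    then show ?thesis using sd unfolding P_def by simp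
  qed
qed

lemma row_in_span:
  fixes H :: "('n::finite \<Rightarrow> 'a::{field,finite}) list"
  assumes "y \<in> set H"
  shows "y \<in> row_span H"
proof -
  obtain k where k: "k < length H" "H ! k = y" using assms by (metis in_set_conv_nth)
  have "y = (\<lambda>j. \<Sum>k'<length H. (if k' = k then 1 else 0) * (H ! k') j)"
  proof
    fix j
    have "(\<Sum>k'<length H. (if k' = k then 1 else 0) * (H ! k') j)
        = (\<Sum>k'<length H. if k = k' then (H ! k') j else 0)"
      by (rule sum.cong) auto
    also have "\<dots> = (H ! k) j" using k(1) by (simp add: sum.delta)
    finally show "y j = (\<Sum>k'<length H. (if k' = k then 1 else 0) * (H ! k') j)" using k(2) by simp
  qed
  then show "y \<in> row_span H" unfolding row_span_def
    by (intro CollectI exI[of _ "\<lambda>k'. if k' = k then 1 else 0"])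
qed

lemma row_count:
  fixes r :: "'n::finite \<Rightarrow> 'a::zero"
  assumes i1: "1 \<le> i"
  shows "card {S::'n set. card S = i \<and> card {j\<in>S. r j \<noteq> 0} = 1}
     \<le> hweight r * ((card (UNIV :: 'n set) - hweight r) choose (i - 1))"
proof -
  define Z where "Z = {j. r j \<noteq> 0}"
  define X where "X = Z \<times> {B. B \<subseteq> -Z \<and> card B = i - 1}"
  have sub: "{S::'n set. card S = i \<and> card {j\<in>S. r j \<noteq> 0} = 1} \<subseteq> (\<lambda>(a, B). insert a B) ` X"
  proof
    fix S :: "'n set" assume "S \<in> {S. card S = i \<and> card {j\<in>S. r j \<noteq> 0} = 1}"
    then have cS: "card S = i" and c1: "card {j\<in>S. r j \<noteq> 0} = 1" by auto
    obtain a where a: "{j\<in>S. r j \<noteq> 0} = {a}" using c1 by (metis card_1_singletonE)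
    have aS: "a \<in> S" and aZ: "a \<in> Z" using a unfolding Z_def by auto
    have BZ: "S - {a} \<subseteq> -Z" using a unfolding Z_def by auto
    have cB: "card (S - {a}) = i - 1" using cS aS by simp
    have "(a, S - {a}) \<in> X" unfolding X_def using aZ BZ cB by simp
    moreover have "S = (\<lambda>(a, B). insert a B) (a, S - {a})" using aS by auto
    ultimately show "S \<in> (\<lambda>(a, B). insert a B) ` X" by blast
  qed
  have "card {S::'n set. card S = i \<and> card {j\<in>S. r j \<noteq> 0} = 1} \<le> card ((\<lambda>(a, B). insert a B) ` X)"
    by (rule card_mono[OF finite sub])
  also have "\<dots> \<le> card X" by (rule card_image_le) simp
  also have "\<dots> = card Z * (card (-Z) choose (i - 1))"
    unfolding X_def card_cartesian_product by (simp add: n_subsets)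
  also have "card (-Z) = card (UNIV :: 'n set) - card Z"
    by (simp add: Compl_eq_Diff_UNIV card_Diff_subset)
  finally show ?thesis unfolding hweight_def Z_def .
qed

lemma main_count:
  fixes C :: "('n::finite \<Rightarrow> 'a::{field,finite}) set" and H :: "('n \<Rightarrow> 'a) list"
  assumes rows: "set H \<subseteq> dual_code C" and i1: "1 \<le> i"
    and cover: "\<And>S. card S = i \<Longrightarrow> has_weight_one_row H S"
    and nd: "n = card (UNIV :: 'n set)"
    and wd: "w = max (nat (\<lceil>real (n + 1) / real i\<rceil> - 1)) (min_dist (dual_code C))"
  shows "n choose i \<le> length H * (w * ((n - w) choose (i - 1)))"
proof -
  define A where "A = (\<lambda>r::'n \<Rightarrow> 'a. {S::'n set. card S = i \<and> card {j\<in>S. r j \<noteq> 0} = 1})"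
  define F where "F = w * ((n - w) choose (i - 1))"
  have cT: "card {S::'n set. card S = i} = n choose i"
    using n_subsets[of "UNIV :: 'n set" i] nd by simp
  have TU: "{S::'n set. card S = i} \<subseteq> (\<Union>k\<in>{..<length H}. A (H ! k))"
  proof
    fix S :: "'n set" assume "S \<in> {S. card S = i}"
    then have cS: "card S = i" by simp
    then obtain r where r: "r \<in> set H" "card {j\<in>S. r j \<noteq> 0} = 1"
      using cover unfolding has_weight_one_row_def by blast
    then obtain k where k: "k < length H" "H ! k = r" by (metis in_set_conv_nth)
    then show "S \<in> (\<Union>k\<in>{..<length H}. A (H ! k))" using cS r unfolding A_def by blast
  qed
  have AF: "card (A r) \<le> F" if "r \<in> set H" for r
  proof -
    have rc: "card (A r) \<le> hweight r * ((n - hweight r) choose (i - 1))"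
      unfolding A_def nd by (rule row_count[OF i1])
    show ?thesis
    proof (cases "r = (\<lambda>j. 0)")
      case True
      then have "hweight r = 0" unfolding hweight_def by simp
      then show ?thesis using rc by simp
    next
      case False
      have rD: "r \<in> dual_code C" using that rows by blast
      have "min_dist (dual_code C) \<le> hweight r"
        by (rule md_facts(2)[OF _ rD False]) (use rD False in blast)
      moreover have "hweight r \<le> n" unfolding hweight_def nd by (rule card_mono) simp_all
      ultimately have "hweight r * ((n - hweight r) choose (i - 1)) \<le> F"
        unfolding F_def wd by (rule f_bound[OF i1])
      then show ?thesis using rc by simp
    qed
  qed
  have "n choose i \<le> card (\<Union>k\<in>{..<length H}. A (H ! k))"
    using card_mono[OF finite TU] cT by simp
  also have "\<dots> \<le> (\<Sum>k\<in>{..<length H}. card (A (H ! k)))" by (rule card_UN_le) simp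
  also have "\<dots> \<le> (\<Sum>k\<in>{..<length H}. F)" by (rule sum_mono) (use AF in simp)
  also have "\<dots> = length H * F" by simp
  finally show ?thesis unfolding F_def .
qed

theorem theorem5:
  fixes C :: "('n::finite \<Rightarrow> 'a::{field,finite}) set"
    and n i w :: nat
  assumes "linear_code C"
    and "\<exists>x\<in>C. x \<noteq> (\<lambda>j. 0)"
    and "n = card (UNIV :: 'n set)"
    and "1 \<le> i" and "i \<le> min_dist C - 1"
    and "w = max (nat (\<lceil>real (n + 1) / real i\<rceil> - 1)) (min_dist (dual_code C))"
  shows "real (stopping_redundancy C)
           \<ge> real (n choose i) / (real w * real ((n - w) choose (i - 1)))"
proof -
  have ex: "\<exists>m H. length H = m \<and> is_parity_check H C \<and> stopping_distance H = min_dist C"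
    using good_H_exists[OF assms(1,2)] by blast
  obtain H where H: "length H = stopping_redundancy C" "is_parity_check H C"
      "stopping_distance H = min_dist C"
    using LeastI_ex[OF ex] unfolding stopping_redundancy_def by blast
  have rows: "set H \<subseteq> dual_code C"
    using row_in_span[of _ H] H(2) unfolding is_parity_check_def by blast
  have sp: "\<forall>S. S \<noteq> {} \<and> card S < min_dist C \<longrightarrow> has_weight_one_row H S"
    by (rule sd_prop[OF H(3)])
  have cover: "has_weight_one_row H S" if "card S = i" for S
  proof -
    have "S \<noteq> {}" using that assms(4) by auto
    moreover have "card S < min_dist C" using that assms(4,5) by simp
    ultimately show ?thesis using sp by blast
  qed
  have cnt: "n choose i \<le> stopping_redundancy C * (w * ((n - w) choose (i - 1)))"
    using main_count[OF rows assms(4) cover assms(3,6)] H(1) by simp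
  show ?thesis
  proof (cases "w * ((n - w) choose (i - 1)) = 0")
    case True
    then have z: "real w * real ((n - w) choose (i - 1)) = 0" by (metis of_nat_0 of_nat_mult)
    show ?thesis unfolding z by simp
  next
    case False
    then have pos: "real w * real ((n - w) choose (i - 1)) > 0" by simp
    have "real (n choose i) \<le> real (stopping_redundancy C) * (real w * real ((n - w) choose (i - 1)))"
      using of_nat_mono[OF cnt] by simp
    then show ?thesis using pos by (simp add: divide_le_eq)
  qed
qed

end
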